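(* Let $L$ be an invertible linear map on $\mathcal{S}^n$ such that $L(CP_n)\subseteq CP_n$. If $L$ is a standard map, then $L=\mathcal{L}_{A,B}$ for suitable entrywise nonnegative matrices $A,B\in M_n(\mathbb{R})$. Conversely, for $n\le 4$, if $L=\mathcal{L}_{A,B}$ with $B$ invertible, then $L$ is a standard map.
   Context: $\mathcal{S}^n$ denotes the space of real symmetric $n\times n$ matrices. $CP_n=\{BB^t: B \text{ a real entrywise nonnegative } n\times k \text{ matrix for some } k\}$ is the cone of completely positive matrices. A standard map on $\mathcal{S}^n$ is a map of the form $X\mapsto RXR^t$ for a fixed $R\in M_n(\mathbb{R})$. For $A,B\in M_n(\mathbb{R})$, the generalized Lyapunov map is $\mathcal{L}_{A,B}(X)=AXB+B^tXA^t$ on $\mathcal{S}^n$. *)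

theory Defs
  imports "HOL-Analysis.Analysis"
begin

definition sym_mats :: "(real^'n^'n) set" where
  "sym_mats = {X. transpose X = X}"

text \<open>CP_n = {B B^t : B entrywise nonnegative n x k for some k}; B is given by its
  entries B i l for l < k.\<close>
definition cp_cone :: "(real^'n^'n) set" where
  "cp_cone = {X. \<exists>(k::nat) (B::'n \<Rightarrow> nat \<Rightarrow> real).
       (\<forall>i l. 0 \<le> B i l) \<and> (\<forall>i j. X $ i $ j = (\<Sum>l<k. B i l * B j l))}"

definition nonneg_mat :: "real^'n^'n \<Rightarrow> bool" where
  "nonneg_mat A \<longleftrightarrow> (\<forall>i j. 0 \<le> A $ i $ j)"

definition linear_on_sym :: "(real^'n^'n \<Rightarrow> real^'n^'n) \<Rightarrow> bool" where
  "linear_on_sym L \<longleftrightarrow> L ` sym_mats \<subseteq> sym_mats \<and>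
     (\<forall>X\<in>sym_mats. \<forall>Y\<in>sym_mats. L (X + Y) = L X + L Y) \<and>
     (\<forall>X\<in>sym_mats. \<forall>c::real. L (c *\<^sub>R X) = c *\<^sub>R L X)"

definition standard_map :: "(real^'n^'n \<Rightarrow> real^'n^'n) \<Rightarrow> bool" where
  "standard_map L \<longleftrightarrow> (\<exists>R::real^'n^'n. \<forall>X\<in>sym_mats. L X = R ** X ** transpose R)"

definition lyap :: "real^'n^'n \<Rightarrow> real^'n^'n \<Rightarrow> real^'n^'n \<Rightarrow> real^'n^'n" where
  "lyap A B X = A ** X ** B + transpose B ** X ** transpose A"

end

theory Submission
  imports Defs
begin

definition outer :: "real^'n \<Rightarrow> real^'n \<Rightarrow> real^'n^'n" where
  "outer x y = (\<chi> i j. x$i * y$j)"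

lemma outer_mult: "A ** outer x y ** B = outer (A *v x) (transpose B *v y)"
  by (simp add: outer_def vec_eq_iff matrix_matrix_mult_def matrix_vector_mult_def
      transpose_def sum_distrib_left sum_distrib_right mult_ac)

lemma outer_sym: "outer x x \<in> sym_mats"
  by (simp add: sym_mats_def outer_def transpose_def vec_eq_iff mult.commute)

lemma outer_cp: assumes "\<forall>i. 0 \<le> x$i" shows "outer x x \<in> cp_cone"
  unfolding cp_cone_def mem_Collect_eq
  by (rule exI[of _ "Suc 0"], rule exI[of _ "\<lambda>i l. x$i"]) (simp add: assms outer_def)

lemma cp_nonneg: assumes "X \<in> cp_cone" shows "0 \<le> X$i$j"
proof -
  from assms obtain k B where "\<forall>i l. 0 \<le> (B::'a\<Rightarrow>nat\<Rightarrow>real) i l" "\<forall>i j. X$i$j = (\<Sum>l<k. B i l * B j l)"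
    unfolding cp_cone_def by blast
  then show ?thesis by (simp add: sum_nonneg)
qed

lemma cp_quad: assumes "X \<in> cp_cone" shows "0 \<le> s^2 * (X$i$i) + 2 * s * t * (X$i$j) + t^2 * (X$j$j)"
proof -
  from assms obtain k B where "\<forall>i l. 0 \<le> (B::'a\<Rightarrow>nat\<Rightarrow>real) i l" and X: "\<forall>i j. X$i$j = (\<Sum>l<k. B i l * B j l)"
    unfolding cp_cone_def by blast
  have "s^2 * (X$i$i) + 2 * s * t * (X$i$j) + t^2 * (X$j$j) = (\<Sum>l<k. (s * B i l + t * B j l)^2)"
    by (simp add: X sum_distrib_left sum.distrib[symmetric] power2_eq_square algebra_simps)
  then show ?thesis by (simp add: sum_nonneg)
qed

lemma inv_ker: assumes "invertible (C::real^'n^'n)" "C *v x = 0" shows "x = 0"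
  using assms matrix_left_invertible_ker unfolding invertible_def by blast

lemma col: fixes C :: "real^'n^'m" shows "(C *v axis k 1) $ i = C$i$k"
  by (simp add: matrix_vector_mult_basis column_def)

lemma lyap_outer: "lyap A B (outer x x) = outer (A *v x) (transpose B *v x) + outer (transpose B *v x) (A *v x)"
  unfolding lyap_def outer_mult by simp

lemma outer_nth: "outer x y $ i $ j = x$i * y$j"
  by (simp add: outer_def)

lemma part2:
  fixes L :: "real^'n^'n \<Rightarrow> real^'n^'n"
  assumes cp: "L ` cp_cone \<subseteq> cp_cone" and Binv: "invertible B"
    and LX: "\<forall>X\<in>sym_mats. L X = lyap A B X"
  shows "standard_map L"
proof -
  define C where "C = transpose B"
  have Cinv: "invertible C" unfolding C_def using Binv by (rule transpose_invertible)
  have Sin: "lyap A B (outer x x) \<in> cp_cone" if "\<forall>i. 0 \<le> x$i" for x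
  proof -
    have "L (outer x x) \<in> cp_cone" using cp outer_cp[OF that] by blast
    then show ?thesis using LX outer_sym by metis
  qed
  have key: "(A *v x)$i * (C *v x)$j = (A *v x)$j * (C *v x)$i" if x: "\<forall>i. 0 \<le> x$i" for x i j
  proof -
    define a where "a = (A *v x)$i"
    define b where "b = (A *v x)$j"
    define c where "c = (C *v x)$i"
    define d where "d = (C *v x)$j"
    have "0 \<le> (b+d)^2 * (lyap A B (outer x x)$i$i) + 2 * (b+d) * (-(a+c)) * (lyap A B (outer x x)$i$j)
       + (-(a+c))^2 * (lyap A B (outer x x)$j$j)"
      by (rule cp_quad[OF Sin[OF x]])
    also have "\<dots> = -2 * (a*d - b*c)^2"
      by (simp add: lyap_outer outer_nth a_def b_def c_def d_def C_def[symmetric] power2_eq_square algebra_simps)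
    finally have "(a*d - b*c)^2 \<le> 0" by simp
    then have "a*d = b*c" by simp
    then show ?thesis by (simp add: a_def b_def c_def d_def)
  qed
  have par: "\<exists>lam. A *v x = lam *\<^sub>R (C *v x)" if x: "\<forall>i. 0 \<le> x$i" "x \<noteq> 0" for x
  proof -
    have "C *v x \<noteq> 0" using inv_ker[OF Cinv] x(2) by blast
    then obtain i where i: "(C *v x)$i \<noteq> 0" by (metis vec_eq_iff zero_index)
    have "A *v x = ((A *v x)$i / (C *v x)$i) *\<^sub>R (C *v x)"
    proof (subst vec_eq_iff, intro allI)
      fix j
      show "(A *v x)$j = (((A *v x)$i / (C *v x)$i) *\<^sub>R (C *v x))$j"
        using key[OF x(1), of i j] i by (simp add: field_simps)
    qed
    then show ?thesis by blast
  qed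
  have ax_nn: "\<forall>i. 0 \<le> (axis k 1 :: real^'n)$i" for k by (simp add: axis_def)
  have ax_nz: "(axis k 1 :: real^'n) \<noteq> 0" for k by (simp add: axis_def vec_eq_iff)
  have "\<forall>k. \<exists>lam. A *v axis k 1 = lam *\<^sub>R (C *v axis k (1::real))"
    using par[OF ax_nn ax_nz] by blast
  then obtain lam where lam: "\<And>k. A *v axis k 1 = lam k *\<^sub>R (C *v axis k (1::real))" by metis
  have eq: "lam k = lam l" for k l
  proof (cases "k = l")
    case False
    have nn: "\<forall>i. 0 \<le> (axis k 1 + axis l 1 :: real^'n)$i" by (simp add: axis_def)
    have nz: "(axis k 1 + axis l 1 :: real^'n) \<noteq> 0" using False by (simp add: axis_def vec_eq_iff) metis
    obtain mu where mu: "A *v (axis k 1 + axis l 1) = mu *\<^sub>R (C *v (axis k 1 + axis l (1::real)))"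
      using par[OF nn nz] by blast
    define v where "v = (lam k - mu) *\<^sub>R axis k 1 + (lam l - mu) *\<^sub>R (axis l 1 :: real^'n)"
    have "C *v v = (lam k *\<^sub>R (C *v axis k 1) + lam l *\<^sub>R (C *v axis l 1)) - mu *\<^sub>R (C *v (axis k 1 + axis l 1))"
      by (simp add: v_def algebra_simps)
    also have "\<dots> = 0" using mu lam[of k] lam[of l] by (simp add: algebra_simps)
    finally have "v = 0" using inv_ker[OF Cinv] by blast
    then have "v $ k = 0" "v $ l = 0" by simp_all
    then show ?thesis using False by (simp add: v_def axis_def)
  qed simp
  obtain k0 :: 'n where True by simp
  define c where "c = lam k0"
  have Ac: "A = c *\<^sub>R C"
  proof -
    have "A $ i $ k = (c *\<^sub>R C) $ i $ k" for i k
    proof -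
      have "A $ i $ k = (A *v axis k 1) $ i" by (simp add: col)
      also have "\<dots> = lam k * C $ i $ k" by (simp add: lam col)
      finally show ?thesis using eq[of k k0] by (simp add: c_def)
    qed
    then show ?thesis by (simp add: vec_eq_iff)
  qed
  have "C *v axis k0 1 \<noteq> 0" using inv_ker[OF Cinv] ax_nz by blast
  then obtain i where i: "(C *v axis k0 1)$i \<noteq> 0" by (metis vec_eq_iff zero_index)
  have "0 \<le> lyap A B (outer (axis k0 1) (axis k0 1)) $ i $ i" by (rule cp_nonneg[OF Sin[OF ax_nn]])
  also have "\<dots> = 2 * c * ((C *v axis k0 1)$i)^2"
    by (simp add: lyap_outer outer_nth Ac C_def[symmetric] col power2_eq_square algebra_simps)
  finally have c0: "0 \<le> c" using i by (simp add: zero_le_mult_iff)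
  define R where "R = sqrt (2*c) *\<^sub>R C"
  have "L X = R ** X ** transpose R" if "X \<in> sym_mats" for X
  proof -
    have "L X = lyap A B X" using LX that by blast
    also have "\<dots> = (2*c) *\<^sub>R (C ** X ** B)"
      by (simp add: lyap_def Ac C_def transpose_scalar matrix_scalar_ac scalar_matrix_assoc[symmetric] scaleR_add_left[symmetric])
    also have "\<dots> = R ** X ** transpose R"
      using c0 by (simp add: R_def C_def transpose_scalar matrix_scalar_ac scalar_matrix_assoc[symmetric])
    finally show ?thesis .
  qed
  then show ?thesis unfolding standard_map_def by blast
qed

lemma lyap_std: "lyap (s *\<^sub>R R) ((s/2) *\<^sub>R transpose R) X = (s * s) *\<^sub>R (R ** X ** transpose R)"
proof -
  have "lyap (s *\<^sub>R R) ((s/2) *\<^sub>R transpose R) X = (s * (s/2)) *\<^sub>R (R ** X ** transpose R) + ((s/2) * s) *\<^sub>R (R ** X ** transpose R)"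
    by (simp add: lyap_def transpose_scalar matrix_scalar_ac scalar_matrix_assoc[symmetric])
  also have "\<dots> = (s * s) *\<^sub>R (R ** X ** transpose R)" by (simp add: scaleR_add_left[symmetric])
  finally show ?thesis .
qed

lemma part1:
  fixes L :: "real^'n^'n \<Rightarrow> real^'n^'n"
  assumes bij: "bij_betw L sym_mats sym_mats" and cp: "L ` cp_cone \<subseteq> cp_cone"
    and LR: "\<forall>X\<in>sym_mats. L X = R ** X ** transpose R"
  shows "\<exists>A B. nonneg_mat A \<and> nonneg_mat B \<and> (\<forall>X\<in>sym_mats. L X = lyap A B X)"
proof -
  have Rinv: "invertible R"
  proof (rule ccontr)
    assume nR: "\<not> invertible R"
    have "\<not> invertible (transpose R)" using nR transpose_invertible[of "transpose R"] by auto
    then have "\<not> (\<forall>x. transpose R *v x = 0 \<longrightarrow> x = 0)"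
      using matrix_left_invertible_ker[of "transpose R"] matrix_left_right_inverse unfolding invertible_def by blast
    then obtain y where y: "transpose R *v y = 0" "y \<noteq> 0" by blast
    have "mat 1 \<in> sym_mats" by (simp add: sym_mats_def transpose_mat)
    then obtain X where X: "X \<in> sym_mats" "L X = mat 1" using bij unfolding bij_betw_def by (metis imageE)
    have "y = mat 1 *v y" by simp
    also have "\<dots> = (R ** X ** transpose R) *v y" using X LR by metis
    also have "\<dots> = 0" by (metis matrix_vector_mul_assoc y(1) matrix_vector_mult_0_right)
    finally show False using y(2) by simp
  qed
  have prod: "0 \<le> (R *v x)$i * (R *v x)$j" if x: "\<forall>i. 0 \<le> x$i" for x i j
  proof -
    have "L (outer x x) \<in> cp_cone" using cp outer_cp[OF x] by blast
    then have "R ** outer x x ** transpose R \<in> cp_cone" using LR outer_sym by metis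
    then have "outer (R *v x) (R *v x) \<in> cp_cone" by (simp add: outer_mult)
    from cp_nonneg[OF this, of i j] show ?thesis by (simp add: outer_nth)
  qed
  have sgn: "(\<forall>i k. 0 \<le> R$i$k) \<or> (\<forall>i k. R$i$k \<le> 0)"
  proof (rule ccontr)
    assume "\<not> ?thesis"
    then obtain i k j l where ik: "0 < R$i$k" and jl: "R$j$l < 0" by (meson not_le)
    have ax_nn: "\<forall>i. 0 \<le> (axis k 1 :: real^'n)$i" for k by (simp add: axis_def)
    have colk: "0 \<le> R$m$k" for m
      using prod[OF ax_nn, of k i m] ik by (simp add: col zero_le_mult_iff)
    have coll: "R$m$l \<le> 0" for m
      using prod[OF ax_nn, of l j m] jl by (simp add: col zero_le_mult_iff)
    have kl: "k \<noteq> l" using colk[of j] jl by auto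
    have minors: "R$p$k * R$q$l = R$p$l * R$q$k" for p q
    proof -
      define a where "a = R$p$k"
      define b where "b = R$p$l"
      define c where "c = R$q$k"
      define d where "d = R$q$l"
      define x where "x = (-(b+d)) *\<^sub>R axis k 1 + (a+c) *\<^sub>R (axis l 1 :: real^'n)"
      have s0: "0 \<le> -(b+d)" using coll[of p] coll[of q] by (simp add: b_def d_def)
      have t0: "0 \<le> a+c" using colk[of p] colk[of q] by (simp add: a_def c_def)
      have xnn: "\<forall>m. 0 \<le> x$m" using s0 t0 kl by (simp add: x_def axis_def)
      have Rx: "(R *v x)$m = (-(b+d)) * R$m$k + (a+c) * R$m$l" for m
        by (simp add: x_def algebra_simps col)
      have "0 \<le> (R *v x)$p * (R *v x)$q" by (rule prod[OF xnn])
      also have "\<dots> = -((a*d - b*c)^2)"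
        by (simp add: Rx a_def b_def c_def d_def power2_eq_square algebra_simps)
      finally have "(a*d - b*c)^2 \<le> 0" by simp
      then have "a*d = b*c" by simp
      then show ?thesis by (simp add: a_def b_def c_def d_def)
    qed
    define v where "v = R$i$l *\<^sub>R axis k 1 - R$i$k *\<^sub>R (axis l 1 :: real^'n)"
    have "R *v v = 0"
    proof (subst vec_eq_iff, intro allI)
      fix q
      show "(R *v v)$q = 0$q" using minors[of i q] by (simp add: v_def algebra_simps col)
    qed
    then have "v = 0" using inv_ker[OF Rinv] by blast
    then have "v $ l = 0" by simp
    then show False using kl ik by (simp add: v_def axis_def)
  qed
  then show ?thesis
  proof
    assume h: "\<forall>i k. 0 \<le> R$i$k"
    have "\<forall>X\<in>sym_mats. L X = lyap (1 *\<^sub>R R) ((1/2) *\<^sub>R transpose R) X"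
      using LR lyap_std[of 1 R] by simp
    moreover have "nonneg_mat (1 *\<^sub>R R)" "nonneg_mat ((1/2) *\<^sub>R transpose R)"
      using h by (simp_all add: nonneg_mat_def transpose_def)
    ultimately show ?thesis by blast
  next
    assume h: "\<forall>i k. R$i$k \<le> 0"
    have "\<forall>X\<in>sym_mats. L X = lyap ((-1) *\<^sub>R R) ((-1/2) *\<^sub>R transpose R) X"
      using LR lyap_std[of "-1" R] by simp
    moreover have "nonneg_mat ((-1) *\<^sub>R R)" "nonneg_mat ((-1/2) *\<^sub>R transpose R)"
      using h by (simp_all add: nonneg_mat_def transpose_def)
    ultimately show ?thesis by blast
  qed
qed

theorem mainTheorem4:
  fixes L :: "real^'n^'n \<Rightarrow> real^'n^'n"
  assumes "linear_on_sym L"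
    and "bij_betw L sym_mats sym_mats"
    and "L ` cp_cone \<subseteq> cp_cone"
  shows "(standard_map L \<longrightarrow>
           (\<exists>A B. nonneg_mat A \<and> nonneg_mat B \<and> (\<forall>X\<in>sym_mats. L X = lyap A B X)))
       \<and> (CARD('n) \<le> 4 \<longrightarrow>
           (\<forall>A B. invertible B \<and> (\<forall>X\<in>sym_mats. L X = lyap A B X) \<longrightarrow> standard_map L))"
  using part1[OF assms(2,3)] part2[OF assms(3)] unfolding standard_map_def by blast

end
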